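(* Assume the setting below, on the mesh $S_\lambda$ with either $\lambda=N$ or $\lambda=\varepsilon^{-1}$. Suppose there are a constant $C^*>0$ and numbers $\eta_1,\eta_2\ge 0$ such that the truncation error of $w$ satisfies \[ |\tau_i[w]|\le \tau_i^*:=\begin{cases} C^*\eta_1\left(1+\varepsilon^{-1}e^{-\beta x_i/\varepsilon}\right), & 1\le i\le J-1,\\ C^*\eta_2, & J\le i\le N-1.\end{cases} \] Then \[ \|w^N-W^N\|\le C\eta,\qquad \eta=\max\{\kappa\eta_1,\eta_2\}, \] where $\kappa=1$ if $\lambda=N$ and $\kappa=1+|\ln\varepsilon|N^{-1}$ if $\lambda=\varepsilon^{-1}$. Here $C$ depends only on $C^*$ and the data $b,c,\beta,Q,a$; it does not depend on $\varepsilon$, $N$, $\eta_1$ or $\eta_2$.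
   Context: Standing setup. Let $0<\varepsilon<1$. Let $b,c,f\in C^4[0,1]$, and let $\beta$ be a constant with $b(x)>\beta>0$ and $c(x)\ge0$ on $[0,1]$. Let $u$ be the solution of $-\varepsilon u''-b u'+cu=f$ on $(0,1)$ with $u(0)=u(1)=0$. Let $u_0$ be the reduced solution, i.e. the solution of $-b u_0'+c u_0=f$ on $(0,1)$ with $u_0(1)=0$. Set $w=u-u_0$; it solves $-\varepsilon w''-bw'+cw=\varepsilon u_0''$ on $(0,1)$, $w(0)=-u_0(0)$, $w(1)=0$. Mesh $S_\lambda$. $N$ is a positive integer. $Q\in(0,1)$ is a fixed rational number such that $J=QN$ is an integer. $a>0$ is a mesh parameter, and $\lambda\in\{N,\varepsilon^{-1}\}$. The transition point is $\xi=(a\varepsilon/\beta)\ln\lambda$, assumed to satisfy $\xi\le Q$. Set $h=\xi/J$ and $H=(1-\xi)/(N-J)$. The mesh points are $x_i=ih$ for $0\le i\le J$ and $x_i=\xi+(i-J)H$ for $J\le i\le N$. Write $h_i=x_i-x_{i-1}$ and $\hbar_i=(h_i+h_{i+1})/2$. $S_N$ is the Shishkin mesh and $S_{1/\varepsilon}$ is the A-mesh. Scheme. For mesh functions define $D^+U_i=(U_{i+1}-U_i)/h_{i+1}$, $D^-U_i=(U_i-U_{i-1})/h_i$ and $D''U_i=(D^+U_i-D^-U_i)/\hbar_i$. Let $\sigma(\rho)=2\rho/(e^{2\rho}-1)$ for $\rho>0$, $\sigma(0)=1$, and $\rho_i=b(x_i)h_{i+1}/(2\varepsilon)$. The ASI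 operator is \[ L^NU_i=-\varepsilon\sigma(\rho_i)D''U_i-b(x_i)D^+U_i+c(x_i)U_i,\qquad 1\le i\le N-1. \] $W^N$ denotes the solution of $W^N_0=-u_0(0)$, $L^NW^N_i=\varepsilon u_0''(x_i)$ for $1\le i\le N-1$, $W^N_N=0$. For a function $g$, $g^N$ is its restriction to the mesh, and $\|U\|=\max_{0\le i\le N}|U_i|$. For smooth $g$ the truncation error is \[ \tau_i[g]=-\varepsilon\sigma(\rho_i)D''g(x_i)-b(x_i)D^+g(x_i)+\varepsilon g''(x_i)+b(x_i)g'(x_i),\qquad 1\le i\le N-1. \] $C$ denotes a generic positive constant independent of $\varepsilon$ and $N$. *)

theory Defs
  imports "HOL-Analysis.Analysis"
begin

definition Ck_on :: "nat \<Rightarrow> (real \<Rightarrow> real) \<Rightarrow> real set \<Rightarrow> bool" where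
  "Ck_on k g S \<longleftrightarrow> (\<exists>D :: nat \<Rightarrow> real \<Rightarrow> real.
      (\<forall>x\<in>S. D 0 x = g x) \<and>
      (\<forall>j<k. \<forall>x\<in>S. (D j has_real_derivative D (Suc j) x) (at x within S)) \<and>
      (\<forall>j\<le>k. continuous_on S (D j)))"

definition mesh :: "nat \<Rightarrow> nat \<Rightarrow> real \<Rightarrow> nat \<Rightarrow> real" where
  "mesh N J xi i = (if i \<le> J then real i * (xi / real J)
                    else xi + real (i - J) * ((1 - xi) / real (N - J)))"

definition stepw :: "(nat \<Rightarrow> real) \<Rightarrow> nat \<Rightarrow> real" where
  "stepw x i = x i - x (i - 1)"

definition hbar :: "(nat \<Rightarrow> real) \<Rightarrow> nat \<Rightarrow> real" where
  "hbar x i = (stepw x i + stepw x (Suc i)) / 2"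

definition Dp :: "(nat \<Rightarrow> real) \<Rightarrow> (nat \<Rightarrow> real) \<Rightarrow> nat \<Rightarrow> real" where
  "Dp x U i = (U (Suc i) - U i) / stepw x (Suc i)"

definition Dm :: "(nat \<Rightarrow> real) \<Rightarrow> (nat \<Rightarrow> real) \<Rightarrow> nat \<Rightarrow> real" where
  "Dm x U i = (U i - U (i - 1)) / stepw x i"

definition Dpp :: "(nat \<Rightarrow> real) \<Rightarrow> (nat \<Rightarrow> real) \<Rightarrow> nat \<Rightarrow> real" where
  "Dpp x U i = (Dp x U i - Dm x U i) / hbar x i"

definition sigma :: "real \<Rightarrow> real" where
  "sigma r = (if r = 0 then 1 else 2 * r / (exp (2 * r) - 1))"

definition rho :: "real \<Rightarrow> (real \<Rightarrow> real) \<Rightarrow> (nat \<Rightarrow> real) \<Rightarrow> nat \<Rightarrow> real" where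
  "rho eps b x i = b (x i) * stepw x (Suc i) / (2 * eps)"

definition LN :: "real \<Rightarrow> (real \<Rightarrow> real) \<Rightarrow> (real \<Rightarrow> real) \<Rightarrow> (nat \<Rightarrow> real)
                   \<Rightarrow> (nat \<Rightarrow> real) \<Rightarrow> nat \<Rightarrow> real" where
  "LN eps b c x U i = - eps * sigma (rho eps b x i) * Dpp x U i - b (x i) * Dp x U i + c (x i) * U i"

text \<open>Truncation error tau_i[g] for g with first and second derivatives g1, g2.\<close>
definition trunc :: "real \<Rightarrow> (real \<Rightarrow> real) \<Rightarrow> (nat \<Rightarrow> real) \<Rightarrow> (real \<Rightarrow> real)
                   \<Rightarrow> (real \<Rightarrow> real) \<Rightarrow> (real \<Rightarrow> real) \<Rightarrow> nat \<Rightarrow> real" where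
  "trunc eps b x g g1 g2 i =
     - eps * sigma (rho eps b x i) * Dpp x (\<lambda>j. g (x j)) i - b (x i) * Dp x (\<lambda>j. g (x j)) i
     + eps * g2 (x i) + b (x i) * g1 (x i)"

end

theory Submission
  imports Defs
begin


lemma sigma_bounds:
  assumes "r > 0" shows "0 < sigma r" "sigma r \<le> 1"
proof -
  have e: "2*r + 1 \<le> exp (2*r)" using exp_ge_add_one_self[of "2*r"] by linarith
  have d: "exp (2*r) - 1 > 0" using e assms by linarith
  show "0 < sigma r" using assms d by (simp add: sigma_def)
  show "sigma r \<le> 1" using assms d e by (simp add: sigma_def divide_le_eq)
qed

lemma LN_lin:
  "LN eps b c x (\<lambda>j. p * U j + q * V j) i = p * LN eps b c x U i + q * LN eps b c x V i"
  unfolding LN_def Dpp_def Dp_def Dm_def by (simp add: divide_inverse; algebra)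

lemma LN_diff:
  "LN eps b c x (\<lambda>j. U j - V j) i = LN eps b c x U i - LN eps b c x V i"
  unfolding LN_def Dpp_def Dp_def Dm_def by (simp add: divide_inverse; algebra)

lemma LN_add:
  "LN eps b c x (\<lambda>j. U j + V j) i = LN eps b c x U i + LN eps b c x V i"
  unfolding LN_def Dpp_def Dp_def Dm_def by (simp add: divide_inverse; algebra)

lemma maxprin:
  fixes x V :: "nat \<Rightarrow> real"
  assumes eps: "eps > 0"
    and mono: "\<And>i. i < N \<Longrightarrow> x i < x (Suc i)"
    and bpos: "\<And>i. 1 \<le> i \<Longrightarrow> i < N \<Longrightarrow> b (x i) > 0"
    and cnn: "\<And>i. 1 \<le> i \<Longrightarrow> i < N \<Longrightarrow> c (x i) \<ge> 0"
    and V0: "V 0 \<ge> 0" and VN: "V N \<ge> 0"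
    and LV: "\<And>i. 1 \<le> i \<Longrightarrow> i < N \<Longrightarrow> LN eps b c x V i \<ge> 0"
  shows "\<forall>i\<le>N. V i \<ge> 0"
proof (rule ccontr)
  assume "\<not> ?thesis"
  then obtain i0 where i0: "i0 \<le> N" "V i0 < 0" by auto
  define m where "m = Min (V ` {..N})"
  have m_le: "\<And>i. i \<le> N \<Longrightarrow> m \<le> V i" by (simp add: m_def)
  have "m \<in> V ` {..N}" unfolding m_def by (rule Min_in) auto
  then have ex: "\<exists>i. i \<le> N \<and> V i = m" by auto
  define k where "k = (LEAST i. i \<le> N \<and> V i = m)"
  have k: "k \<le> N \<and> V k = m" unfolding k_def by (rule LeastI_ex[OF ex])
  have kmin: "\<And>i. i < k \<Longrightarrow> \<not>(i \<le> N \<and> V i = m)" unfolding k_def by (rule not_less_Least)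
  have mneg: "m < 0" using m_le[OF i0(1)] i0(2) by linarith
  have k0: "k \<noteq> 0" using k V0 mneg by (metis not_le)
  have kN: "k \<noteq> N" using k VN mneg by auto
  have k1: "1 \<le> k" "k < N" using k0 kN k by auto
  have prev: "V (k-1) > m" using kmin[of "k-1"] m_le[of "k-1"] k1 by fastforce
  have next': "V (Suc k) \<ge> m" using m_le[of "Suc k"] k1 by simp
  define h1 where "h1 = x k - x (k-1)"
  define h2 where "h2 = x (Suc k) - x k"
  have h1: "h1 > 0" using mono[of "k-1"] k1 unfolding h1_def by simp
  have h2: "h2 > 0" using mono[of k] k1 unfolding h2_def by simp
  have sw1: "stepw x k = h1" by (simp add: stepw_def h1_def)
  have sw2: "stepw x (Suc k) = h2" by (simp add: stepw_def h2_def)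
  have hb: "hbar x k = (h1+h2)/2" by (simp add: hbar_def sw1 sw2)
  have rho: "rho eps b x k > 0" unfolding rho_def sw2 using bpos[OF k1] h2 eps by simp
  have sg: "sigma (rho eps b x k) > 0" by (rule sigma_bounds(1)[OF rho])
  have Dp: "Dp x V k \<ge> 0" unfolding Dp_def sw2 using h2 next' k by simp
  have Dm: "Dm x V k < 0" unfolding Dm_def sw1 using h1 prev k by (simp add: divide_neg_pos)
  have Dpp: "Dpp x V k > 0" unfolding Dpp_def hb using Dp Dm h1 h2 by simp
  have t1: "eps * sigma (rho eps b x k) * Dpp x V k > 0" using eps sg Dpp by simp
  have t2: "b (x k) * Dp x V k \<ge> 0" using bpos[OF k1] Dp by simp
  have t3: "c (x k) * V k \<le> 0" using cnn[OF k1] k mneg by (simp add: mult_nonneg_nonpos)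
  have "LN eps b c x V k < 0" unfolding LN_def using t1 t2 t3 by linarith
  then show False using LV[OF k1] by linarith
qed



fun psi :: "real \<Rightarrow> real \<Rightarrow> (nat \<Rightarrow> real) \<Rightarrow> nat \<Rightarrow> real" where
  "psi g eps x 0 = 1"
| "psi g eps x (Suc i) = psi g eps x i / (1 + g * (x (Suc i) - x i) / eps)"

lemma psi_bounds:
  fixes x :: "nat \<Rightarrow> real"
  assumes g: "g > 0" and eps: "eps > 0" and mono: "\<And>i. i < N \<Longrightarrow> x i < x (Suc i)"
  shows "i \<le> N \<Longrightarrow> 0 < psi g eps x i \<and> psi g eps x i \<le> 1 \<and> exp (- g * (x i - x 0) / eps) \<le> psi g eps x i"
proof (induction i)
  case 0 then show ?case by simp
next
  case (Suc i)
  then have IH: "0 < psi g eps x i" "psi g eps x i \<le> 1" "exp (- g * (x i - x 0) / eps) \<le> psi g eps x i" by auto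
  define d where "d = x (Suc i) - x i"
  have d: "d > 0" using mono[of i] Suc.prems unfolding d_def by simp
  define r where "r = 1 + g * d / eps"
  have r1: "r \<ge> 1" unfolding r_def using d g eps by simp
  have rexp: "r \<le> exp (g * d / eps)" unfolding r_def using exp_ge_add_one_self[of "g*d/eps"] by linarith
  have ps: "psi g eps x (Suc i) = psi g eps x i / r" by (simp add: r_def d_def)
  have A: "0 < psi g eps x i / r" using IH r1 by simp
  have B: "psi g eps x i / r \<le> 1" using IH r1 by (simp add: divide_le_eq)
  have ee: "- g * (x (Suc i) - x 0) / eps = - g * (x i - x 0) / eps - g * d / eps"
    by (simp add: d_def diff_divide_distrib[symmetric] algebra_simps)
  have "exp (- g * (x (Suc i) - x 0) / eps) = exp (- g * (x i - x 0) / eps) / exp (g * d / eps)"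
    unfolding ee by (rule exp_diff)
  also have "\<dots> \<le> psi g eps x i / r"
    using IH(3) rexp r1 IH(1) by (intro frac_le) auto
  finally show ?case using A B ps by (simp only: ps)
qed

lemma LN_psi:
  fixes x :: "nat \<Rightarrow> real"
  assumes g: "g > 0" and eps: "eps > 0" and mono: "\<And>i. i < N \<Longrightarrow> x i < x (Suc i)"
    and i: "1 \<le> i" "i < N" and bb: "b (x i) \<ge> 2 * g" and cc: "c (x i) \<ge> 0"
  shows "LN eps b c x (psi g eps x) i \<ge>
     psi g eps x i * g / (eps * (1 + g * (x (Suc i) - x i) / eps)) * (b (x i) - 2 * g)"
proof -
  obtain k where k: "i = Suc k" using i by (cases i) auto
  define h1 where "h1 = x i - x k"
  define h2 where "h2 = x (Suc i) - x i"
  have h1: "h1 > 0" using mono[of k] i k unfolding h1_def by simp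
  have h2: "h2 > 0" using mono[of i] i unfolding h2_def by simp
  define r1 where "r1 = 1 + g * h1 / eps"
  define r2 where "r2 = 1 + g * h2 / eps"
  have "g * h1 / eps > 0" "g * h2 / eps > 0" using g h1 h2 eps by simp_all
  then have r1p: "r1 > 0" "r1 \<noteq> 0" and r2p: "r2 > 0" "r2 \<noteq> 0" unfolding r1_def r2_def by linarith+
  define P where "P = psi g eps x i"
  have Pp: "P > 0" unfolding P_def using psi_bounds[of g eps N x i] g eps mono i by simp
  have sw1: "stepw x i = h1" by (simp add: stepw_def h1_def k)
  have sw2: "stepw x (Suc i) = h2" by (simp add: stepw_def h2_def)
  have hb: "hbar x i = (h1+h2)/2" by (simp add: hbar_def sw1 sw2)
  have psS: "psi g eps x (Suc i) = P / r2" by (simp add: P_def r2_def h2_def)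
  have psk: "psi g eps x (i - 1) = P * r1"
    using r1p by (simp add: P_def r1_def h1_def k)
  have Dp: "Dp x (psi g eps x) i = - P * g / (eps * r2)"
    unfolding Dp_def sw2 psS P_def[symmetric]
  proof -
    have r2e: "r2 = (eps + g*h2)/eps" unfolding r2_def using eps by (simp add: field_simps)
    have ne: "eps + g * h2 > 0" using g h2 eps by (simp add: add_pos_pos)
    have "P / r2 - P = - P * g * h2 / (eps + g*h2)" unfolding r2e using ne eps
      by (simp add: field_simps)
    moreover have "eps * r2 = eps + g*h2" unfolding r2e using eps by simp
    ultimately show "(P / r2 - P) / h2 = - P * g / (eps * r2)" using ne eps h2
      by simp
  qed
  have Dm: "Dm x (psi g eps x) i = - P * g / eps"
    unfolding Dm_def sw1 psk P_def[symmetric] using r1p h1 eps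
    by (simp add: r1_def field_simps)
  have Dpp: "Dpp x (psi g eps x) i = P * g * g * h2 / (eps * eps * r2) / ((h1+h2)/2)"
    unfolding Dpp_def hb Dp Dm using r2p h2 eps
  proof -
    have a1: "- P * g / (eps * r2) - - P * g / eps = P * g * (r2 - 1) / (eps * r2)"
      using r2p eps by (simp add: field_simps)
    have a2: "r2 - 1 = g * h2 / eps" unfolding r2_def by simp
    show "(- P * g / (eps * r2) - - P * g / eps) / ((h1 + h2) / 2) =
      P * g * g * h2 / (eps * eps * r2) / ((h1 + h2) / 2)"
      unfolding a1 a2 by simp
  qed
  have rho: "rho eps b x i > 0" unfolding rho_def sw2 using bb g h2 eps by simp
  have s0: "sigma (rho eps b x i) > 0" "sigma (rho eps b x i) \<le> 1"
    using sigma_bounds[OF rho] by auto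
  define s where "s = sigma (rho eps b x i)"
  have key: "s * (h2 / ((h1+h2)/2)) \<le> 2"
  proof -
    have "h2 / ((h1+h2)/2) \<le> 2" using h1 h2 by (simp add: divide_le_eq)
    moreover have "h2 / ((h1+h2)/2) \<ge> 0" using h1 h2 by simp
    ultimately show ?thesis using s0 unfolding s_def
      by (metis mult_le_one mult.commute mult_2_right  less_le_not_le mult_le_cancel_left1 dual_order.trans linorder_le_cases mult_right_mono mult_1 less_eq_real_def)
  qed
  have LNe: "LN eps b c x (psi g eps x) i =
     P * g / (eps * r2) * (b (x i) - s * g * (h2 / ((h1+h2)/2))) + c (x i) * P"
  proof -
    define D where "D = (h1 + h2) / 2"
    have hh: "D > 0" using h1 h2 by (simp add: D_def)
    have "eps * s * (P * g * g * h2 / (eps * eps * r2) / D) = P * g / (eps * r2) * (s * g * (h2 / D))"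
      using eps r2p hh by (simp add: field_simps)
    then have "eps * s * (P * g * g * h2 / (eps * eps * r2) / ((h1 + h2) / 2)) = P * g / (eps * r2) * (s * g * (h2 / ((h1+h2)/2)))"
      by (simp only: D_def)
    then show ?thesis unfolding LN_def Dpp Dp s_def[symmetric] P_def[symmetric]
      by (simp add: algebra_simps)
  qed
  have f: "P * g / (eps * r2) > 0" using Pp g eps r2p by simp
  have "s * g * (h2 / ((h1+h2)/2)) \<le> 2 * g" using key g
    by (metis mult.commute mult.left_commute mult_le_cancel_left_pos)
  then have "P * g / (eps * r2) * (b (x i) - 2 * g) \<le> P * g / (eps * r2) * (b (x i) - s * g * (h2 / ((h1+h2)/2)))"
    using f by (intro mult_left_mono) auto
  moreover have "c (x i) * P \<ge> 0" using cc Pp by simp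
  ultimately show ?thesis unfolding LNe P_def[symmetric] r2_def[symmetric] h2_def[symmetric] by linarith
qed



lemma mono_le:
  fixes x :: "nat \<Rightarrow> real"
  assumes mono: "\<And>i. i < N \<Longrightarrow> x i < x (Suc i)"
  shows "j \<le> N \<Longrightarrow> i \<le> j \<Longrightarrow> x i \<le> x j"
proof (induction j)
  case 0 then show ?case by simp
next
  case (Suc j)
  show ?case
  proof (cases "i = Suc j")
    case True then show ?thesis by simp
  next
    case False
    then have "x i \<le> x j" using Suc by simp
    also have "x j \<le> x (Suc j)" using mono[of j] Suc.prems by simp
    finally show ?thesis .
  qed
qed

lemma LN_lin1:
  fixes x :: "nat \<Rightarrow> real"
  assumes h1: "x (i-1) < x i" and h2: "x i < x (Suc i)" and i: "1 \<le> i"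
    and cc: "c (x i) \<ge> 0" and xi: "x i \<le> 1"
  shows "LN eps b c x (\<lambda>j. 1 - x j) i \<ge> b (x i)"
proof -
  have Dp: "Dp x (\<lambda>j. 1 - x j) i = -1" unfolding Dp_def stepw_def using h2 by (simp add: divide_eq_eq)
  have Dm: "Dm x (\<lambda>j. 1 - x j) i = -1" unfolding Dm_def stepw_def using h1 by (simp add: divide_eq_eq)
  have Dpp: "Dpp x (\<lambda>j. 1 - x j) i = 0" unfolding Dpp_def Dp Dm by simp
  show ?thesis unfolding LN_def Dpp Dp using cc xi by simp
qed

lemma core:
  fixes x e tau :: "nat \<Rightarrow> real" and b c :: "real \<Rightarrow> real"
  assumes bet: "\<beta> > 0" and bpos: "\<forall>t\<in>{0..1}. b t > \<beta>" and cpos: "\<forall>t\<in>{0..1}. c t \<ge> 0"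
    and eps: "eps > 0" and Cs: "Cstar > 0" and et1: "\<eta>1 \<ge> 0" and et2: "\<eta>2 \<ge> 0"
    and x0: "x 0 = 0" and xN: "x N = 1" and mono: "\<And>i. i < N \<Longrightarrow> x i < x (Suc i)"
    and N1: "N \<ge> 1"
    and fine: "\<And>i. 1 \<le> i \<Longrightarrow> i \<le> J - 1 \<Longrightarrow> x (Suc i) - x i \<le> x i"
    and e0: "e 0 = 0" and eN: "e N = 0"
    and Le: "\<forall>i. 1 \<le> i \<and> i \<le> N - 1 \<longrightarrow> LN eps b c x e i = tau i"
    and t1: "\<forall>i. 1 \<le> i \<and> i \<le> J - 1 \<longrightarrow>
               \<bar>tau i\<bar> \<le> Cstar * \<eta>1 * (1 + exp (- \<beta> * x i / eps) / eps)"
    and t2: "\<forall>i. J \<le> i \<and> i \<le> N - 1 \<longrightarrow> \<bar>tau i\<bar> \<le> Cstar * \<eta>2"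
  shows "\<forall>i\<le>N. \<bar>e i\<bar> \<le> Cstar * (8 / \<beta>^2 + 1 / \<beta>) * max \<eta>1 \<eta>2"
proof -
  define g where "g = \<beta> / 4"
  have g: "g > 0" using bet by (simp add: g_def)
  define M where "M = max \<eta>1 \<eta>2"
  have M: "M \<ge> \<eta>1" "M \<ge> \<eta>2" "M \<ge> 0" using et1 unfolding M_def by auto
  define A where "A = Cstar * \<eta>1 * (8 / \<beta>^2)"
  define B where "B = Cstar * M / \<beta>"
  have A: "A \<ge> 0" unfolding A_def using Cs et1 by simp
  have B: "B \<ge> 0" unfolding B_def using Cs M bet by simp
  define \<Psi> where "\<Psi> = psi g eps x"
  define \<Phi> where "\<Phi> = (\<lambda>j. A * \<Psi> j + B * (1 - x j))"
  have psib: "\<And>i. i \<le> N \<Longrightarrow> 0 < \<Psi> i \<and> \<Psi> i \<le> 1 \<and> exp (- g * (x i - x 0) / eps) \<le> \<Psi> i"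
    unfolding \<Psi>_def using psi_bounds[of g eps N x] g eps mono by blast
  have xr: "\<And>i. i \<le> N \<Longrightarrow> 0 \<le> x i \<and> x i \<le> 1"
  proof -
    fix i assume "i \<le> N"
    then show "0 \<le> x i \<and> x i \<le> 1" using mono_le[of N x i 0] mono_le[of N x N i] mono x0 xN by auto
  qed
  have Phi_nn: "\<And>i. i \<le> N \<Longrightarrow> \<Phi> i \<ge> 0"
  proof -
    fix i assume i: "i \<le> N"
    have "A * \<Psi> i \<ge> 0" using psib[OF i] A by simp
    moreover have "B * (1 - x i) \<ge> 0" using xr[OF i] B by simp
    ultimately show "\<Phi> i \<ge> 0" unfolding \<Phi>_def by simp
  qed
  have Phi_le: "\<And>i. i \<le> N \<Longrightarrow> \<Phi> i \<le> Cstar * (8 / \<beta>^2 + 1 / \<beta>) * M"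
  proof -
    fix i assume i: "i \<le> N"
    have "A * \<Psi> i \<le> A" using psib[OF i] A by (simp add: mult_left_le)
    moreover have "B * (1 - x i) \<le> B" using xr[OF i] B by (simp add: mult_left_le)
    moreover have "A \<le> Cstar * M * (8 / \<beta>^2)" unfolding A_def using M Cs bet by (intro mult_right_mono) auto
    ultimately show "\<Phi> i \<le> Cstar * (8 / \<beta>^2 + 1 / \<beta>) * M" unfolding \<Phi>_def B_def
      by (simp add: algebra_simps)
  qed
  have LPhi: "\<And>i. 1 \<le> i \<Longrightarrow> i < N \<Longrightarrow> LN eps b c x \<Phi> i \<ge> \<bar>tau i\<bar>"
  proof -
    fix i assume i: "1 \<le> i" "i < N"
    have xi: "0 \<le> x i" "x i \<le> 1" using xr[of i] i by auto
    have bi: "b (x i) > \<beta>" and ci: "c (x i) \<ge> 0" using bpos cpos xi by auto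
    have h1: "x (i-1) < x i" using mono[of "i-1"] i by simp
    have h2: "x i < x (Suc i)" using mono[of i] i by simp
    have lin: "LN eps b c x \<Phi> i = A * LN eps b c x \<Psi> i + B * LN eps b c x (\<lambda>j. 1 - x j) i"
      unfolding \<Phi>_def by (rule LN_lin)
    have L1: "LN eps b c x (\<lambda>j. 1 - x j) i \<ge> \<beta>" using LN_lin1[where x=x and i=i and c=c and eps=eps and b=b] h1 h2 i(1) ci xi(2) bi by simp
    define r2 where "r2 = 1 + g * (x (Suc i) - x i) / eps"
    have r2: "r2 \<ge> 1" unfolding r2_def using g h2 eps by simp
    have LP: "LN eps b c x \<Psi> i \<ge> \<Psi> i * g / (eps * r2) * (b (x i) - 2 * g)"
      unfolding \<Psi>_def r2_def using LN_psi[of g eps N x i b c] g eps mono i ci bi bet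
      by (simp add: g_def)
    have Pi: "\<Psi> i > 0" using psib[of i] i by simp
    have LP0: "LN eps b c x \<Psi> i \<ge> 0"
    proof -
      have "\<Psi> i * g / (eps * r2) \<ge> 0" using Pi g eps r2 by simp
      moreover have "b (x i) - 2 * g \<ge> 0" using bi bet unfolding g_def by simp
      ultimately show ?thesis using LP by (meson mult_nonneg_nonneg order.trans)
    qed
    have BL: "B * LN eps b c x (\<lambda>j. 1 - x j) i \<ge> Cstar * M"
    proof -
      have "B * \<beta> \<le> B * LN eps b c x (\<lambda>j. 1 - x j) i" using L1 B by (rule mult_left_mono)
      moreover have "B * \<beta> = Cstar * M" unfolding B_def using bet by simp
      ultimately show ?thesis by simp
    qed
    show "LN eps b c x \<Phi> i \<ge> \<bar>tau i\<bar>"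
    proof (cases "i \<le> J - 1")
      case True
      have tb: "\<bar>tau i\<bar> \<le> Cstar * \<eta>1 * (1 + exp (- \<beta> * x i / eps) / eps)" using t1 i True by auto
      have hf: "x (Suc i) - x i \<le> x i" using fine[OF i(1) True] .
      have r2e: "r2 \<le> exp (g * x i / eps)"
      proof -
        have "r2 \<le> exp (g * (x (Suc i) - x i) / eps)" unfolding r2_def using exp_ge_add_one_self[of "g * (x (Suc i) - x i) / eps"] by linarith
        also have "\<dots> \<le> exp (g * x i / eps)" using hf g eps by (simp add: divide_right_mono)
        finally show ?thesis .
      qed
      have pe: "exp (- g * x i / eps) \<le> \<Psi> i" using psib[of i] i x0 by simp
      have "exp (- \<beta> * x i / eps) \<le> exp (- g * x i / eps) / exp (g * x i / eps)"
      proof -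
        have "exp (- g * x i / eps) / exp (g * x i / eps) = exp (- (2*g) * x i / eps)"
          by (simp add: exp_diff[symmetric] field_simps)
        moreover have "- \<beta> * x i / eps \<le> - (2*g) * x i / eps"
        proof -
          have "(2*g) * x i \<le> \<beta> * x i" using xi bet unfolding g_def by (intro mult_right_mono) auto
          then have "(2*g) * x i / eps \<le> \<beta> * x i / eps" using eps by (simp add: divide_right_mono)
          then show ?thesis by simp
        qed
        ultimately show ?thesis by simp
      qed
      also have "\<dots> \<le> \<Psi> i / r2" using pe r2e r2 Pi by (intro frac_le) auto
      finally have ex: "exp (- \<beta> * x i / eps) \<le> \<Psi> i / r2" .
      have "\<Psi> i * g / (eps * r2) * (b (x i) - 2 * g) \<ge> (\<Psi> i / r2) / eps * (\<beta> ^ 2 / 8)"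
      proof -
        have "\<Psi> i * g / (eps * r2) * (b (x i) - 2 * g) = (\<Psi> i / r2) / eps * (g * (b (x i) - 2 * g))"
          by (simp add: field_simps)
        moreover have "g * (b (x i) - 2 * g) \<ge> \<beta>^2 / 8"
        proof -
          have "\<beta> / 4 * (b (x i) - 2 * (\<beta> / 4)) \<ge> \<beta> / 4 * (\<beta> / 2)"
            using bi bet by (intro mult_left_mono) auto
          then show ?thesis by (simp add: power2_eq_square g_def)
        qed
        moreover have "(\<Psi> i / r2) / eps \<ge> 0" using Pi r2 eps by simp
        ultimately show ?thesis by (metis mult_left_mono)
      qed
      then have "LN eps b c x \<Psi> i \<ge> exp (- \<beta> * x i / eps) / eps * (\<beta> ^ 2 / 8)"
      proof -
        have "exp (- \<beta> * x i / eps) / eps \<le> (\<Psi> i / r2) / eps" using divide_right_mono[OF ex, of eps] eps by simp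
        then have "exp (- \<beta> * x i / eps) / eps * (\<beta> ^ 2 / 8) \<le> (\<Psi> i / r2) / eps * (\<beta> ^ 2 / 8)"
          by (rule mult_right_mono) simp
        then show ?thesis using LP \<open>\<Psi> i * g / (eps * r2) * (b (x i) - 2 * g) \<ge> (\<Psi> i / r2) / eps * (\<beta> ^ 2 / 8)\<close> by linarith
      qed
      then have "A * LN eps b c x \<Psi> i \<ge> A * (exp (- \<beta> * x i / eps) / eps * (\<beta> ^ 2 / 8))"
        using A by (metis mult_left_mono)
      moreover have "A * (exp (- \<beta> * x i / eps) / eps * (\<beta> ^ 2 / 8)) = Cstar * \<eta>1 * (exp (- \<beta> * x i / eps) / eps)"
        unfolding A_def using bet by (simp add: field_simps)
      moreover have "Cstar * M \<ge> Cstar * \<eta>1" using M Cs by simp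
      ultimately show ?thesis using lin BL tb by (simp add: algebra_simps)
    next
      case False
      then have "J \<le> i" by simp
      then have tb: "\<bar>tau i\<bar> \<le> Cstar * \<eta>2" using t2 i by auto
      have "A * LN eps b c x \<Psi> i \<ge> 0" using A LP0 by simp
      moreover have "Cstar * M \<ge> Cstar * \<eta>2" using M Cs by simp
      ultimately show ?thesis using lin BL tb by linarith
    qed
  qed
  have Lt: "\<And>i. 1 \<le> i \<Longrightarrow> i < N \<Longrightarrow> LN eps b c x e i = tau i" using Le by auto
  have bx: "\<And>i. 1 \<le> i \<Longrightarrow> i < N \<Longrightarrow> b (x i) > 0"
  proof -
    fix i assume "1 \<le> i" "i < N"
    then have "x i \<in> {0..1}" using xr[of i] by simp
    then show "b (x i) > 0" using bpos bet by force
  qed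
  have cx: "\<And>i. 1 \<le> i \<Longrightarrow> i < N \<Longrightarrow> c (x i) \<ge> 0"
  proof -
    fix i assume "1 \<le> i" "i < N"
    then have "x i \<in> {0..1}" using xr[of i] by simp
    then show "c (x i) \<ge> 0" using cpos by force
  qed
  have P1: "\<forall>i\<le>N. (\<lambda>j. \<Phi> j - e j) i \<ge> 0"
  proof (rule maxprin[where eps=eps and N=N and x=x and b=b and c=c])
    show "\<And>i. 1 \<le> i \<Longrightarrow> i < N \<Longrightarrow> 0 < b (x i)" by (rule bx)
    show "\<And>i. 1 \<le> i \<Longrightarrow> i < N \<Longrightarrow> 0 \<le> c (x i)" by (rule cx)
    show "0 \<le> \<Phi> 0 - e 0" using Phi_nn[of 0] e0 by simp
    show "0 \<le> \<Phi> N - e N" using Phi_nn[of N] eN by simp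
    show "\<And>i. 1 \<le> i \<Longrightarrow> i < N \<Longrightarrow> 0 \<le> LN eps b c x (\<lambda>j. \<Phi> j - e j) i"
    proof -
      fix i assume i: "1 \<le> i" "i < N"
      have "LN eps b c x (\<lambda>j. \<Phi> j - e j) i = LN eps b c x \<Phi> i - tau i" using Lt[OF i] by (simp add: LN_diff)
      then show "0 \<le> LN eps b c x (\<lambda>j. \<Phi> j - e j) i" using LPhi[OF i] abs_ge_self[of "tau i"] by linarith
    qed
  qed (use eps mono in auto)
  have P2: "\<forall>i\<le>N. (\<lambda>j. \<Phi> j + e j) i \<ge> 0"
  proof (rule maxprin[where eps=eps and N=N and x=x and b=b and c=c])
    show "\<And>i. 1 \<le> i \<Longrightarrow> i < N \<Longrightarrow> 0 < b (x i)" by (rule bx)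
    show "\<And>i. 1 \<le> i \<Longrightarrow> i < N \<Longrightarrow> 0 \<le> c (x i)" by (rule cx)
    show "0 \<le> \<Phi> 0 + e 0" using Phi_nn[of 0] e0 by simp
    show "0 \<le> \<Phi> N + e N" using Phi_nn[of N] eN by simp
    show "\<And>i. 1 \<le> i \<Longrightarrow> i < N \<Longrightarrow> 0 \<le> LN eps b c x (\<lambda>j. \<Phi> j + e j) i"
    proof -
      fix i assume i: "1 \<le> i" "i < N"
      have "LN eps b c x (\<lambda>j. \<Phi> j + e j) i = LN eps b c x \<Phi> i + tau i" using Lt[OF i] by (simp add: LN_add)
      then show "0 \<le> LN eps b c x (\<lambda>j. \<Phi> j + e j) i" using LPhi[OF i] abs_ge_minus_self[of "tau i"] by linarith
    qed
  qed (use eps mono in auto)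
  show ?thesis
  proof (intro allI impI)
    fix i assume i: "i \<le> N"
    have "e i \<le> \<Phi> i" "- e i \<le> \<Phi> i" using P1 P2 i by auto
    then have "\<bar>e i\<bar> \<le> \<Phi> i" by linarith
    then show "\<bar>e i\<bar> \<le> Cstar * (8 / \<beta>^2 + 1 / \<beta>) * max \<eta>1 \<eta>2" using Phi_le[OF i] M_def by simp
  qed
qed



lemma LN_trunc:
  "LN eps b c x (\<lambda>j. g (x j)) i = trunc eps b x g g1 g2 i - eps * g2 (x i) - b (x i) * g1 (x i) + c (x i) * g (x i)"
  unfolding LN_def trunc_def by simp

lemma inst:
  fixes b c f u0 u01 u02 u u1 u2 :: "real \<Rightarrow> real" and W x :: "nat \<Rightarrow> real"
    and N J :: nat
  assumes bet: "\<beta> > 0" and bpos: "\<forall>x\<in>{0..1}. b x > \<beta>" and cpos: "\<forall>x\<in>{0..1}. c x \<ge> 0"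
    and Q0: "0 < Q" and Q1: "Q < 1" and a0: "a > 0" and Cs: "Cstar > 0"
    and u0ode: "\<forall>x\<in>{0<..<1}. (u0 has_real_derivative u01 x) (at x)
                     \<and> (u01 has_real_derivative u02 x) (at x)
                     \<and> - b x * u01 x + c x * u0 x = f x"
    and u01: "u0 1 = 0"
    and lamd: "lam = (if shishkin then real N else 1 / eps)"
    and xid: "xi = (a * eps / \<beta>) * ln lam"
    and xd: "x = mesh N J xi"
    and eps0: "0 < eps" and eps1: "eps < 1" and N0: "0 < N" and JQ: "real J = Q * real N" and xiQ: "xi \<le> Q"
    and uode: "\<forall>t\<in>{0<..<1}. (u has_real_derivative u1 t) (at t)
                     \<and> (u1 has_real_derivative u2 t) (at t)
                     \<and> - eps * u2 t - b t * u1 t + c t * u t = f t"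
    and uz0: "u 0 = 0" and uz1: "u 1 = 0" and W0: "W 0 = - u0 0" and WN: "W N = 0"
    and LW: "\<forall>i. 1 \<le> i \<and> i \<le> N - 1 \<longrightarrow> LN eps b c x W i = eps * u02 (x i)"
    and et1: "\<eta>1 \<ge> 0" and et2: "\<eta>2 \<ge> 0"
    and t1: "\<forall>i. 1 \<le> i \<and> i \<le> J - 1 \<longrightarrow>
               \<bar>trunc eps b x (\<lambda>t. u t - u0 t) (\<lambda>t. u1 t - u01 t) (\<lambda>t. u2 t - u02 t) i\<bar>
                  \<le> Cstar * \<eta>1 * (1 + exp (- \<beta> * x i / eps) / eps)"
    and t2: "\<forall>i. J \<le> i \<and> i \<le> N - 1 \<longrightarrow>
               \<bar>trunc eps b x (\<lambda>t. u t - u0 t) (\<lambda>t. u1 t - u01 t) (\<lambda>t. u2 t - u02 t) i\<bar> \<le> Cstar * \<eta>2"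
  shows "\<forall>i\<le>N. \<bar>u (x i) - u0 (x i) - W i\<bar>
           \<le> Cstar * (8 / \<beta>^2 + 1 / \<beta>) * max ((if shishkin then 1 else 1 + \<bar>ln eps\<bar> / real N) * \<eta>1) \<eta>2"
proof -
  have J0: "0 < J" using JQ Q0 N0 by (metis of_nat_0_less_iff mult_pos_pos)
  have JN: "J < N"
  proof -
    have "Q * real N < real N" using Q1 N0 by simp
    then show ?thesis using JQ by simp
  qed
  have lam1: "lam > 1"
  proof (cases shishkin)
    case True
    then show ?thesis using lamd J0 JN by simp
  next
    case False
    then show ?thesis using lamd eps0 eps1 by simp
  qed
  have xi0: "xi > 0" unfolding xid using lam1 a0 eps0 bet by simp
  have xi1: "xi < 1" using xiQ Q1 by simp
  define h where "h = xi / real J"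
  define H where "H = (1 - xi) / real (N - J)"
  have h0: "h > 0" unfolding h_def using xi0 J0 by simp
  have H0: "H > 0" unfolding H_def using xi1 JN by simp
  have xlo: "\<And>i. i \<le> J \<Longrightarrow> x i = real i * h" unfolding xd mesh_def h_def by simp
  have xhi: "\<And>i. J \<le> i \<Longrightarrow> x i = xi + real (i - J) * H"
  proof -
    fix i assume i: "J \<le> i"
    show "x i = xi + real (i - J) * H"
    proof (cases "i = J")
      case True then show ?thesis unfolding xd mesh_def h_def H_def using J0 by simp
    next
      case False then show ?thesis unfolding xd mesh_def H_def using i by simp
    qed
  qed
  have x0: "x 0 = 0" using xlo[of 0] by simp
  have xN: "x N = 1" using xhi[of N] JN unfolding H_def by simp
  have mono: "\<And>i. i < N \<Longrightarrow> x i < x (Suc i)"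
  proof -
    fix i assume i: "i < N"
    show "x i < x (Suc i)"
    proof (cases "Suc i \<le> J")
      case True then show ?thesis using xlo[of i] xlo[of "Suc i"] h0 by (simp add: algebra_simps)
    next
      case False
      then have "J \<le> i" by simp
      then show ?thesis using xhi[of i] xhi[of "Suc i"] H0 by (simp add: Suc_diff_le algebra_simps)
    qed
  qed
  have fine: "\<And>i. 1 \<le> i \<Longrightarrow> i \<le> J - 1 \<Longrightarrow> x (Suc i) - x i \<le> x i"
  proof -
    fix i :: nat assume i: "1 \<le> i" "i \<le> J - 1"
    then have "Suc i \<le> J" using J0 by simp
    then have "x (Suc i) - x i = h" using xlo[of i] xlo[of "Suc i"] by (simp add: algebra_simps)
    moreover have "x i \<ge> h" using xlo[of i] i h0 \<open>Suc i \<le> J\<close> by simp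
    ultimately show "x (Suc i) - x i \<le> x i" by simp
  qed
  have xin: "\<And>i. 1 \<le> i \<Longrightarrow> i < N \<Longrightarrow> x i \<in> {0<..<1}"
  proof -
    fix i :: nat assume i: "1 \<le> i" "i < N"
    have "x 0 < x 1" using mono[of 0] N0 by simp
    also have "x 1 \<le> x i" using mono_le[of N x i 1] mono i by simp
    finally have a: "0 < x i" using x0 by simp
    have "x i < x (Suc i)" using mono i by simp
    also have "x (Suc i) \<le> x N" using mono_le[of N x N "Suc i"] mono i by simp
    finally have "x i < 1" using xN by simp
    then show "x i \<in> {0<..<1}" using a by simp
  qed
  define e where "e = (\<lambda>i. u (x i) - u0 (x i) - W i)"
  define tau where "tau = trunc eps b x (\<lambda>t. u t - u0 t) (\<lambda>t. u1 t - u01 t) (\<lambda>t. u2 t - u02 t)"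
  have e0: "e 0 = 0" unfolding e_def using x0 uz0 W0 by simp
  have eN: "e N = 0" unfolding e_def using xN uz1 u01 WN by simp
  have Le: "\<forall>i. 1 \<le> i \<and> i \<le> N - 1 \<longrightarrow> LN eps b c x e i = tau i"
  proof (intro allI impI)
    fix i assume i: "1 \<le> i \<and> i \<le> N - 1"
    then have i': "1 \<le> i" "i < N" using N0 by auto
    have t: "x i \<in> {0<..<1}" using xin[OF i'] .
    have o1: "- eps * u2 (x i) - b (x i) * u1 (x i) + c (x i) * u (x i) = f (x i)" using uode t by blast
    have o2: "- b (x i) * u01 (x i) + c (x i) * u0 (x i) = f (x i)" using u0ode t by blast
    have "LN eps b c x e i = LN eps b c x (\<lambda>j. u (x j) - u0 (x j)) i - LN eps b c x W i"
      unfolding e_def by (rule LN_diff)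
    also have "LN eps b c x (\<lambda>j. u (x j) - u0 (x j)) i = tau i - eps * (u2 (x i) - u02 (x i))
       - b (x i) * (u1 (x i) - u01 (x i)) + c (x i) * (u (x i) - u0 (x i))"
      unfolding tau_def using LN_trunc[of eps b c x "\<lambda>t. u t - u0 t" i "\<lambda>t. u1 t - u01 t" "\<lambda>t. u2 t - u02 t"]
      by simp
    finally show "LN eps b c x e i = tau i" using LW i o1 o2 by (simp add: algebra_simps)
  qed
  have N1: "1 \<le> N" using N0 by linarith
  have core': "\<forall>i\<le>N. \<bar>e i\<bar> \<le> Cstar * (8 / \<beta>^2 + 1 / \<beta>) * max \<eta>1 \<eta>2"
    by (rule core[OF bet bpos cpos eps0 Cs et1 et2 x0 xN mono N1 fine e0 eN Le t1[folded tau_def] t2[folded tau_def]])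
  define \<kappa> where "\<kappa> = (if shishkin then 1 else 1 + \<bar>ln eps\<bar> / real N)"
  have k1: "\<kappa> \<ge> 1" unfolding \<kappa>_def by simp
  have "max \<eta>1 \<eta>2 \<le> max (\<kappa> * \<eta>1) \<eta>2"
    using k1 et1 by (metis max.mono mult_le_cancel_right1 order_refl not_le mult_left_mono mult_1)
  moreover have "Cstar * (8 / \<beta>^2 + 1 / \<beta>) \<ge> 0" using Cs bet by simp
  ultimately have "Cstar * (8 / \<beta>^2 + 1 / \<beta>) * max \<eta>1 \<eta>2 \<le> Cstar * (8 / \<beta>^2 + 1 / \<beta>) * max (\<kappa> * \<eta>1) \<eta>2"
    by (simp add: mult_left_mono)
  then show ?thesis using core' unfolding e_def \<kappa>_def by (meson order.trans)
qed

theorem theorem2: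
  fixes b c f u0 u01 u02 :: "real \<Rightarrow> real"
    and \<beta> Q a Cstar :: real
    and shishkin :: bool
  assumes "Ck_on 4 b {0..1}" and "Ck_on 4 c {0..1}" and "Ck_on 4 f {0..1}"
    and "\<beta> > 0" and "\<forall>x\<in>{0..1}. b x > \<beta>" and "\<forall>x\<in>{0..1}. c x \<ge> 0"
    and "Q \<in> \<rat>" and "0 < Q" and "Q < 1" and "a > 0" and "Cstar > 0"
    and "continuous_on {0..1} u0"
    and "\<forall>x\<in>{0<..<1}. (u0 has_real_derivative u01 x) (at x)
                     \<and> (u01 has_real_derivative u02 x) (at x)
                     \<and> - b x * u01 x + c x * u0 x = f x"
    and "u0 1 = 0"
  shows "\<exists>C>0. \<forall>(\<epsilon>::real) (N::nat) (J::nat) (u::real \<Rightarrow> real) u1 u2 (W::nat \<Rightarrow> real) \<eta>1 \<eta>2.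
    (let lam = (if shishkin then real N else 1 / \<epsilon>);
         \<xi> = (a * \<epsilon> / \<beta>) * ln lam;
         x = mesh N J \<xi>;
         w = (\<lambda>t. u t - u0 t); w1 = (\<lambda>t. u1 t - u01 t); w2 = (\<lambda>t. u2 t - u02 t);
         \<kappa> = (if shishkin then 1 else 1 + \<bar>ln \<epsilon>\<bar> / real N)
     in (0 < \<epsilon> \<and> \<epsilon> < 1 \<and> 0 < N \<and> real J = Q * real N \<and> \<xi> \<le> Q
         \<and> continuous_on {0..1} u
         \<and> (\<forall>t\<in>{0<..<1}. (u has_real_derivative u1 t) (at t)
                     \<and> (u1 has_real_derivative u2 t) (at t)
                     \<and> - \<epsilon> * u2 t - b t * u1 t + c t * u t = f t)
         \<and> u 0 = 0 \<and> u 1 = 0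
         \<and> W 0 = - u0 0 \<and> W N = 0
         \<and> (\<forall>i. 1 \<le> i \<and> i \<le> N - 1 \<longrightarrow> LN \<epsilon> b c x W i = \<epsilon> * u02 (x i))
         \<and> \<eta>1 \<ge> 0 \<and> \<eta>2 \<ge> 0
         \<and> (\<forall>i. 1 \<le> i \<and> i \<le> J - 1 \<longrightarrow>
               \<bar>trunc \<epsilon> b x w w1 w2 i\<bar> \<le> Cstar * \<eta>1 * (1 + exp (- \<beta> * x i / \<epsilon>) / \<epsilon>))
         \<and> (\<forall>i. J \<le> i \<and> i \<le> N - 1 \<longrightarrow> \<bar>trunc \<epsilon> b x w w1 w2 i\<bar> \<le> Cstar * \<eta>2))
        \<longrightarrow> (\<forall>i\<le>N. \<bar>w (x i) - W i\<bar> \<le> C * max (\<kappa> * \<eta>1) \<eta>2))"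
  proof -
  have Cpos: "Cstar * (8 / \<beta>^2 + 1 / \<beta>) > 0" using assms(4,11) by (simp add: add_pos_pos)
  show ?thesis
    apply (rule exI[of _ "Cstar * (8 / \<beta>^2 + 1 / \<beta>)"])
    apply (intro conjI allI)
     apply (rule Cpos)
    apply (unfold Let_def)
    apply (intro impI)
    apply (elim conjE)
    apply (rule inst[OF assms(4,5,6,8,9,10,11,13,14) refl refl refl])
                        apply assumption+
    done
qed

end
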